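(* Let $L\in\mathbb R^{N\times N}$ be symmetric positive semidefinite with eigenvalues $0=\lambda_1<\lambda_2\le\cdots\le\lambda_N$ and orthonormal eigenvectors $u_1,\dots,u_N$ (so $\ker L = \mathrm{span}(u_1)$). Let $P\in\mathbb R^{n\times N}$ have full row rank, let $P^+$ be its Moore–Penrose pseudoinverse, $\Pi = P^+P$, and suppose $\Pi u_1 = u_1$. Let $L_c = (P^+)^\top L P^+$ with eigenvalues $\tilde\lambda_1\le\cdots\le\tilde\lambda_n$, $\gamma_1 = \lambda_{\min}((PP^\top)^{-1})$, $\gamma_2 = \lambda_{\max}((PP^\top)^{-1})$. Let $k\le n$ and $\mathbf U_k = \mathrm{span}(u_1,\dots,u_k)$. If $L_c$ and $L$ are $(\mathbf U_k,\epsilon_k)$-similar and $\epsilon_k^2<\lambda_2/\lambda_k$, then $$\gamma_1\lambda_k\le\tilde\lambda_k\le\gamma_2\,\frac{(1+\epsilon_k)^2}{1-\epsilon_k^2(\lambda_k/\lambda_2)}\,\lambda_k.$$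
   Context: For PSD $M$, $\|y\|_M=\sqrt{y^\top My}$. $L_c$ and $L$ are $(\mathbf R,\epsilon)$-similar if $\epsilon\ge0$ and $\|x-P^+Px\|_L\le\epsilon\|x\|_L$ for all $x\in\mathbf R$. *)

theory Defs
  imports "HOL-Analysis.Analysis"
begin

definition is_pinv :: "real^'a^'b \<Rightarrow> real^'b^'a \<Rightarrow> bool" where
  "is_pinv P X \<longleftrightarrow> P ** X ** P = P \<and> X ** P ** X = X \<and>
     transpose (P ** X) = P ** X \<and> transpose (X ** P) = X ** P"

definition pinv :: "real^'a^'b \<Rightarrow> real^'b^'a" where
  "pinv P = (THE X. is_pinv P X)"

definition eigvals :: "real^'n^'n \<Rightarrow> real set" where
  "eigvals A = {c. \<exists>v. v \<noteq> 0 \<and> A *v v = c *\<^sub>R v}"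

definition lambda_min :: "real^'n^'n \<Rightarrow> real" where
  "lambda_min A = Min (eigvals A)"

definition lambda_max :: "real^'n^'n \<Rightarrow> real" where
  "lambda_max A = Max (eigvals A)"

definition mnorm :: "real^'n^'n \<Rightarrow> real^'n \<Rightarrow> real" where
  "mnorm M y = sqrt (y \<bullet> (M *v y))"

definition similar_on :: "real^'N^'n \<Rightarrow> real^'N^'N \<Rightarrow> (real^'N) set \<Rightarrow> real \<Rightarrow> bool" where
  "similar_on P L R \<epsilon> \<longleftrightarrow> \<epsilon> \<ge> 0 \<and>
     (\<forall>x\<in>R. mnorm L (x - (pinv P ** P) *v x) \<le> \<epsilon> * mnorm L x)"

end

theory Submission imports Defs begin

lemma dot_transpose: "(transpose A *v x) \<bullet> y = x \<bullet> ((A::real^'a^'b) *v y)"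
  by (simp add: dot_lmul_matrix)

lemma sym_dot: assumes "transpose A = A" shows "x \<bullet> ((A::real^'a^'a) *v y) = (A *v x) \<bullet> y"
  by (metis assms dot_transpose)

lemma disc:
  fixes a b c :: real
  assumes "\<forall>t. 0 \<le> a + 2*t*b + t^2*c" "0 \<le> c" "0 \<le> a"
  shows "b^2 \<le> a*c"
proof (cases "c > 0")
  case True
  have "0 \<le> a + 2*(-b/c)*b + (-b/c)^2*c" using assms(1) by blast
  also have "\<dots> = a - b^2/c" using True by (simp add: power2_eq_square field_simps)
  finally show ?thesis using True by (simp add: field_simps)
next
  case False
  hence c0: "c = 0" using assms by auto
  show ?thesis
  proof (rule ccontr)
    assume "\<not> ?thesis"
    hence "b \<noteq> 0" using c0 by auto
    have "0 \<le> a + 2*(-(a+1)/(2*b))*b + (-(a+1)/(2*b))^2*c" using assms(1) by blast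
    also have "\<dots> = -1" using c0 \<open>b\<noteq>0\<close> by (simp add: field_simps)
    finally show False by simp
  qed
qed

lemma on_expand:
  fixes w :: "nat \<Rightarrow> real^'m" and A :: "real^'m^'m"
  assumes fin: "finite I"
    and orth: "\<forall>i\<in>I. \<forall>j\<in>I. w i \<bullet> w j = (if i = j then 1 else 0)"
    and eig: "\<forall>i\<in>I. A *v w i = c i *\<^sub>R w i"
    and x: "x \<in> span (w ` I)"
  shows "x \<bullet> (A *v x) = (\<Sum>i\<in>I. c i * (x \<bullet> w i)^2)"
    and "x \<bullet> x = (\<Sum>i\<in>I. (x \<bullet> w i)^2)"
proof -
  define y where "y = (\<Sum>i\<in>I. (x \<bullet> w i) *\<^sub>R w i)"
  have wy: "w j \<bullet> y = x \<bullet> w j" if "j \<in> I" for j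
  proof -
    have "w j \<bullet> y = (\<Sum>i\<in>I. (x \<bullet> w i) * (w j \<bullet> w i))"
      by (simp add: y_def inner_sum_right)
    also have "\<dots> = (\<Sum>i\<in>I. if i = j then x \<bullet> w j else 0)"
      using orth that by (intro sum.cong) auto
    also have "\<dots> = x \<bullet> w j" using fin that by simp
    finally show ?thesis .
  qed
  have yspan: "y \<in> span (w ` I)" unfolding y_def
    by (intro span_sum span_scale span_base) auto
  have "orthogonal (x - y) z" if "z \<in> span (w ` I)" for z
    using that
  proof (rule orthogonal_to_span)
    fix z assume "z \<in> w ` I"
    then obtain j where "j \<in> I" "z = w j" by auto
    then show "orthogonal (x - y) z" using wy[of j]
      by (simp add: orthogonal_def inner_diff_left) (simp add: inner_commute)
  qed
  from this[of "x - y"] have "x - y = 0"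
    using x yspan by (simp add: orthogonal_def span_diff)
  hence xy: "x = y" by simp
  have Ax: "A *v x = (\<Sum>i\<in>I. (c i * (x \<bullet> w i)) *\<^sub>R w i)"
  proof -
    have "A *v x = A *v y" using xy by simp
    also have "\<dots> = (\<Sum>i\<in>I. A *v ((x \<bullet> w i) *\<^sub>R w i))"
      unfolding y_def using linear_sum[OF matrix_vector_mul_linear[of A]]
      by (simp add: o_def)
    also have "\<dots> = (\<Sum>i\<in>I. (c i * (x \<bullet> w i)) *\<^sub>R w i)"
      using eig by (intro sum.cong) (auto simp: matrix_vector_mult_scaleR)
    finally show ?thesis .
  qed
  show "x \<bullet> (A *v x) = (\<Sum>i\<in>I. c i * (x \<bullet> w i)^2)"
    unfolding Ax by (simp add: inner_sum_right power2_eq_square mult.assoc)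
  show "x \<bullet> x = (\<Sum>i\<in>I. (x \<bullet> w i)^2)"
  proof -
    have "x \<bullet> x = x \<bullet> y" using xy by simp
    thus ?thesis by (simp add: y_def inner_sum_right power2_eq_square)
  qed
qed
lemma on_bounds:
  fixes w :: "nat \<Rightarrow> real^'m" and A :: "real^'m^'m"
  assumes fin: "finite I"
    and orth: "\<forall>i\<in>I. \<forall>j\<in>I. w i \<bullet> w j = (if i = j then 1 else 0)"
    and eig: "\<forall>i\<in>I. A *v w i = c i *\<^sub>R w i"
    and x: "x \<in> span (w ` I)"
  shows "(\<forall>i\<in>I. c i \<le> b) \<Longrightarrow> x \<bullet> (A *v x) \<le> b * (x \<bullet> x)"
    and "(\<forall>i\<in>I. b \<le> c i) \<Longrightarrow> b * (x \<bullet> x) \<le> x \<bullet> (A *v x)"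
proof -
  note e = on_expand[OF fin orth eig x]
  show "(\<forall>i\<in>I. c i \<le> b) \<Longrightarrow> x \<bullet> (A *v x) \<le> b * (x \<bullet> x)"
    unfolding e sum_distrib_left by (intro sum_mono) (simp add: mult_right_mono)
  show "(\<forall>i\<in>I. b \<le> c i) \<Longrightarrow> b * (x \<bullet> x) \<le> x \<bullet> (A *v x)"
    unfolding e sum_distrib_left by (intro sum_mono) (simp add: mult_right_mono)
qed

lemma on_indep:
  fixes w :: "nat \<Rightarrow> real^'m"
  assumes orth: "\<forall>i\<in>I. \<forall>j\<in>I. w i \<bullet> w j = (if i = j then 1 else 0)"
  shows "independent (w ` I)" "inj_on w I"
proof -
  show inj: "inj_on w I"
  proof (rule inj_onI)
    fix i j assume "i \<in> I" "j \<in> I" "w i = w j"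
    then have "w i \<bullet> w j = 1" using orth by auto
    then show "i = j" using orth \<open>i\<in>I\<close> \<open>j\<in>I\<close> by (auto split: if_splits)
  qed
  show "independent (w ` I)"
  proof (rule pairwise_orthogonal_independent)
    show "pairwise orthogonal (w ` I)"
      using orth by (auto simp: pairwise_def orthogonal_def)
    show "0 \<notin> w ` I"
    proof
      assume "0 \<in> w ` I"
      then obtain i where "i \<in> I" "w i = 0" by auto
      with orth show False by force
    qed
  qed
qed

lemma on_dim:
  fixes w :: "nat \<Rightarrow> real^'m"
  assumes orth: "\<forall>i\<in>I. \<forall>j\<in>I. w i \<bullet> w j = (if i = j then 1 else 0)"
  shows "dim (span (w ` I)) = card I"
  using on_indep[OF orth] dim_span_eq_card_independent card_image by metis

lemma int_nonzero:
  fixes S T :: "(real^'m) set"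
  assumes "subspace S" "subspace T" "dim S + dim T > CARD('m)"
  shows "\<exists>x. x \<in> S \<and> x \<in> T \<and> x \<noteq> 0"
proof (rule ccontr)
  assume "\<not> ?thesis"
  hence "S \<inter> T \<subseteq> {0}" by auto
  hence "dim (S \<inter> T) = 0" using dim_subset[of "S \<inter> T" "{0}"] by simp
  moreover have "dim {x + y |x y. x \<in> S \<and> y \<in> T} \<le> CARD('m)" by (rule dim_subset_UNIV_cart)
  ultimately show False using dim_sums_Int[OF assms(1,2)] assms(3) by linarith
qed

lemma eig_orth:
  fixes A :: "real^'m^'m"
  assumes sym: "transpose A = A" and "A *v v = a *\<^sub>R v" "A *v w = b *\<^sub>R w" "a \<noteq> b"
  shows "v \<bullet> w = 0"
proof -
  have "v \<bullet> (A *v w) = (A *v v) \<bullet> w" by (rule sym_dot[OF sym])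
  hence "b * (v \<bullet> w) = a * (v \<bullet> w)" using assms by simp
  thus ?thesis using assms(4) by simp
qed

lemma eig_finite:
  fixes A :: "real^'m^'m"
  assumes sym: "transpose A = A"
  shows "finite (eigvals A)"
proof -
  define f where "f c = (SOME v. v \<noteq> 0 \<and> A *v v = c *\<^sub>R v)" for c
  have f: "f c \<noteq> 0 \<and> A *v f c = c *\<^sub>R f c" if "c \<in> eigvals A" for c
    using that unfolding eigvals_def f_def by (rule CollectE) (rule someI_ex)
  have inj: "inj_on f (eigvals A)"
  proof (rule inj_onI)
    fix a b assume ab: "a \<in> eigvals A" "b \<in> eigvals A" "f a = f b"
    show "a = b"
    proof (rule ccontr)
      assume "a \<noteq> b"
      hence "f a \<bullet> f b = 0" using eig_orth[OF sym] f ab by blast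
      thus False using ab f by simp
    qed
  qed
  have "independent (f ` eigvals A)"
  proof (rule pairwise_orthogonal_independent)
    show "pairwise orthogonal (f ` eigvals A)"
      unfolding pairwise_def orthogonal_def
      using eig_orth[OF sym] f by (metis imageE)
    show "0 \<notin> f ` eigvals A" using f by auto
  qed
  hence "finite (f ` eigvals A)" using finiteI_independent by blast
  thus ?thesis using inj finite_imageD by blast
qed

lemma rayleigh_min:
  fixes A :: "real^'m^'m"
  assumes sym: "transpose A = A"
  shows "\<exists>\<mu>\<in>eigvals A. \<forall>x. \<mu> * (x \<bullet> x) \<le> x \<bullet> (A *v x)"
proof -
  let ?S = "sphere (0::real^'m) 1"
  obtain i :: 'm where True by simp
  have ne: "?S \<noteq> {}" using norm_axis_1[of i] by (metis dist_0_norm mem_sphere empty_iff)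
  have cont: "continuous_on ?S (\<lambda>x. x \<bullet> (A *v x))"
    by (intro continuous_intros linear_continuous_on linear_linear[THEN iffD1] matrix_vector_mul_linear)
  obtain x0 where x0: "x0 \<in> ?S" "\<And>y. y \<in> ?S \<Longrightarrow> x0 \<bullet> (A *v x0) \<le> y \<bullet> (A *v y)"
    using continuous_attains_inf[OF compact_sphere ne cont] by blast
  define \<mu> where "\<mu> = x0 \<bullet> (A *v x0)"
  have x0n: "x0 \<bullet> x0 = 1" using x0(1) by (simp add: dot_square_norm)
  have q: "\<mu> * (x \<bullet> x) \<le> x \<bullet> (A *v x)" for x
  proof (cases "x = 0")
    case True thus ?thesis by simp
  next
    case False
    define y where "y = (1 / norm x) *\<^sub>R x"
    have "y \<in> ?S" using False by (simp add: y_def)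
    hence "\<mu> \<le> y \<bullet> (A *v y)" using x0 \<mu>_def by simp
    also have "y \<bullet> (A *v y) = (x \<bullet> (A *v x)) / (norm x)^2"
      by (simp add: y_def matrix_vector_mult_scaleR power2_eq_square)
    finally show ?thesis using False by (simp add: dot_square_norm field_simps)
  qed
  have "A *v x0 = \<mu> *\<^sub>R x0"
  proof -
    define z where "z = A *v x0 - \<mu> *\<^sub>R x0"
    define c where "c = z \<bullet> (A *v z) - \<mu> * (z \<bullet> z)"
    have "\<forall>t. 0 \<le> 0 + 2*t*(z \<bullet> z) + t^2*c"
    proof
      fix t :: real
      have "0 \<le> (x0 + t *\<^sub>R z) \<bullet> (A *v (x0 + t *\<^sub>R z)) - \<mu> * ((x0 + t *\<^sub>R z) \<bullet> (x0 + t *\<^sub>R z))"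
        using q[of "x0 + t *\<^sub>R z"] by linarith
      also have "\<dots> = 0 + 2*t*(z \<bullet> z) + t^2*c"
      proof -
        have s: "x0 \<bullet> (A *v z) = z \<bullet> (A *v x0)" using sym_dot[OF sym] by (simp add: inner_commute)
        show ?thesis unfolding c_def
          using s x0n
          by (simp add: matrix_vector_right_distrib matrix_vector_mult_scaleR inner_add_left inner_add_right
              power2_eq_square z_def inner_diff_left inner_diff_right \<mu>_def algebra_simps inner_commute[of z x0] inner_commute[of "A *v x0" x0])
      qed
      finally show "0 \<le> 0 + 2*t*(z \<bullet> z) + t^2*c" .
    qed
    moreover have "0 \<le> c" using q[of z] by (simp add: c_def)
    ultimately have "(z \<bullet> z)^2 \<le> 0 * c" by (intro disc) auto
    hence "z = 0" by simp
    thus ?thesis by (simp add: z_def)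
  qed
  moreover have "x0 \<noteq> 0" using x0n by auto
  ultimately have "\<mu> \<in> eigvals A" unfolding eigvals_def by blast
  thus ?thesis using q by blast
qed

lemma lmin_le:
  fixes A :: "real^'m^'m"
  assumes sym: "transpose A = A"
  shows "lambda_min A * (x \<bullet> x) \<le> x \<bullet> (A *v x)"
proof -
  obtain \<mu> where m: "\<mu> \<in> eigvals A" "\<And>x. \<mu> * (x \<bullet> x) \<le> x \<bullet> (A *v x)"
    using rayleigh_min[OF sym] by blast
  have "lambda_min A \<le> \<mu>" unfolding lambda_min_def using m(1) eig_finite[OF sym] by simp
  hence "lambda_min A * (x \<bullet> x) \<le> \<mu> * (x \<bullet> x)" by (simp add: mult_right_mono)
  thus ?thesis using m(2)[of x] by linarith
qed

lemma neg_mv: "(- A) *v x = - ((A::real^'m^'n) *v x)"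
  by (simp add: matrix_vector_mult_def vec_eq_iff sum_negf)

lemma lmax_ge:
  fixes A :: "real^'m^'m"
  assumes sym: "transpose A = A"
  shows "x \<bullet> (A *v x) \<le> lambda_max A * (x \<bullet> x)"
proof -
  have s2: "transpose (- A) = - A" using sym by (simp add: transpose_def vec_eq_iff)
  obtain \<mu> where m: "\<mu> \<in> eigvals (- A)" "\<And>x. \<mu> * (x \<bullet> x) \<le> x \<bullet> ((- A) *v x)"
    using rayleigh_min[OF s2] by blast
  have "- \<mu> \<in> eigvals A" using m(1) unfolding eigvals_def neg_mv
    by (auto simp: scaleR_minus_left[symmetric] simp del: scaleR_minus_left) (metis minus_minus neg_equal_iff_equal scaleR_minus_left)
  hence "- \<mu> \<le> lambda_max A" unfolding lambda_max_def using eig_finite[OF sym] by simp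
  hence "(- \<mu>) * (x \<bullet> x) \<le> lambda_max A * (x \<bullet> x)" by (intro mult_right_mono) auto
  thus ?thesis using m(2)[of x] by (simp add: neg_mv)
qed

lemma pinv_facts:
  fixes P :: "real^'N^'n"
  assumes rk: "rank P = CARD('n)"
  shows "P ** transpose P ** matrix_inv (P ** transpose P) = mat 1"
    and "matrix_inv (P ** transpose P) ** (P ** transpose P) = mat 1"
    and "transpose (matrix_inv (P ** transpose P)) = matrix_inv (P ** transpose P)"
    and "pinv P = transpose P ** matrix_inv (P ** transpose P)"
proof -
  define G where "G = P ** transpose P"
  define M where "M = matrix_inv G"
  have injT: "inj ((*v) (transpose P))"
    using rk rank_transpose[of P] full_rank_injective[of "transpose P"] by simp
  have "\<forall>y. G *v y = 0 \<longrightarrow> y = 0"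
  proof (intro allI impI)
    fix y assume "G *v y = 0"
    hence "y \<bullet> (P *v (transpose P *v y)) = 0" by (metis G_def matrix_vector_mul_assoc inner_zero_right)
    hence "(transpose P *v y) \<bullet> (transpose P *v y) = 0" by (metis dot_transpose)
    hence "transpose P *v y = transpose P *v 0" by (simp del: transpose_matrix_vector)
    thus "y = 0" using injT by (meson injD)
  qed
  hence "invertible G" by (simp add: invertible_left_inverse matrix_left_invertible_ker)
  hence GM: "G ** M = mat 1 \<and> M ** G = mat 1"
    unfolding M_def matrix_inv_def invertible_def by (rule someI_ex)
  have tG: "transpose G = G" by (simp add: G_def matrix_transpose_mul)
  have "transpose M ** G = mat 1"
    using GM tG by (metis matrix_transpose_mul transpose_mat)
  hence tM: "transpose M = M"
    by (metis GM matrix_mul_assoc matrix_mul_lid matrix_mul_rid)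
  show "P ** transpose P ** matrix_inv (P ** transpose P) = mat 1"
    "matrix_inv (P ** transpose P) ** (P ** transpose P) = mat 1"
    "transpose (matrix_inv (P ** transpose P)) = matrix_inv (P ** transpose P)"
    using GM tM by (simp_all add: G_def M_def)
  define X where "X = transpose P ** M"
  have PX: "P ** X = mat 1" using GM by (simp add: X_def G_def matrix_mul_assoc)
  have "is_pinv P X"
    unfolding is_pinv_def
  proof (intro conjI)
    show "P ** X ** P = P" using PX by simp
    show "X ** P ** X = X" using PX by (metis matrix_mul_assoc matrix_mul_rid)
    show "transpose (P ** X) = P ** X" using PX by simp
    show "transpose (X ** P) = X ** P"
      using tM by (simp add: X_def matrix_transpose_mul matrix_mul_assoc)
  qed
  moreover have "Y = X" if Y: "is_pinv P Y" for Y
  proof -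
    have y1: "P ** Y ** P = P" and y2: "Y ** P ** Y = Y" and y3: "transpose (Y ** P) = Y ** P"
      using Y unfolding is_pinv_def by auto
    have "(P ** Y) ** G = G" using y1 by (metis G_def matrix_mul_assoc)
    hence PY: "P ** Y = mat 1" using GM
      by (metis matrix_mul_assoc matrix_mul_rid)
    have "Y = transpose (Y ** P) ** Y" using y2 y3 by simp
    hence Yeq: "Y = transpose P ** (transpose Y ** Y)"
      by (simp add: matrix_transpose_mul matrix_mul_assoc)
    hence "G ** (transpose Y ** Y) = mat 1" using PY
      by (metis G_def matrix_mul_assoc)
    hence "transpose Y ** Y = M" using GM
      by (metis matrix_mul_assoc matrix_mul_lid matrix_mul_rid)
    thus ?thesis using Yeq X_def by simp
  qed
  ultimately have "pinv P = X" unfolding pinv_def by (rule the_equality)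
  thus "pinv P = transpose P ** matrix_inv (P ** transpose P)" by (simp add: X_def M_def G_def)
qed

lemma final:
  fixes D xx yy lk lt g e :: real
  assumes "D > 0" "xx > 0" "yy > 0" "lk \<ge> 0" "lt * yy \<le> (1+e)^2 * lk * xx" "D * xx \<le> g * yy"
  shows "lt \<le> g * ((1+e)^2 / D) * lk"
proof -
  have gpos: "g > 0" using assms(1,2,3,6) by (smt (verit) mult_pos_pos mult_nonpos_nonneg)
  have r0: "0 \<le> g * ((1+e)^2 / D) * lk" using gpos assms by simp
  show ?thesis
  proof (cases "lt \<le> 0")
    case True thus ?thesis using r0 by linarith
  next
    case False
    have "lt * (D * xx) \<le> lt * (g * yy)" using False assms(6) by (intro mult_left_mono) auto
    also have "\<dots> = g * (lt * yy)" by simp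
    also have "\<dots> \<le> g * ((1+e)^2 * lk * xx)" using gpos assms(5) by (intro mult_left_mono) auto
    finally have "lt * (D * xx) \<le> (g * ((1+e)^2 / D) * lk) * (D * xx)" using assms(1) by (simp add: field_simps)
    thus ?thesis using assms(1,2) by (simp add: mult_le_cancel_right pos_le_divide_eq mult_ac)
  qed
qed
lemma quad_expand:
  fixes L :: "real^'m^'m"
  assumes sym: "transpose L = L"
  shows "(x + t *\<^sub>R e) \<bullet> (L *v (x + t *\<^sub>R e)) = x \<bullet> (L *v x) + 2*t*(e \<bullet> (L *v x)) + t^2*(e \<bullet> (L *v e))"
proof -
  have s: "x \<bullet> (L *v e) = e \<bullet> (L *v x)" using sym_dot[OF sym, of x e] by (simp add: inner_commute)
  show ?thesis using s
    by (simp add: matrix_vector_right_distrib matrix_vector_mult_scaleR inner_add_left inner_add_right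
        power2_eq_square algebra_simps inner_commute[of e x])
qed

theorem theorem2:
  fixes L :: "real^'N^'N" and P :: "real^'N^'n"
    and lam :: "nat \<Rightarrow> real" and u :: "nat \<Rightarrow> real^'N"
    and lt :: "nat \<Rightarrow> real" and v :: "nat \<Rightarrow> real^'n"
    and k :: nat and \<epsilon> :: real
  assumes N2: "CARD('N) \<ge> 2"
    and L_sym: "transpose L = L"
    and L_psd: "\<forall>x. 0 \<le> x \<bullet> (L *v x)"
    and u_eig: "\<forall>i\<in>{1..CARD('N)}. L *v u i = lam i *\<^sub>R u i"
    and u_orth: "\<forall>i\<in>{1..CARD('N)}. \<forall>j\<in>{1..CARD('N)}. u i \<bullet> u j = (if i = j then 1 else 0)"
    and lam_sorted: "\<forall>i\<in>{1..CARD('N)}. \<forall>j\<in>{1..CARD('N)}. i \<le> j \<longrightarrow> lam i \<le> lam j"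
    and lam1: "lam 1 = 0" and lam12: "lam 1 < lam 2"
    and P_rank: "rank P = CARD('n)"
    and Pi_u1: "(pinv P ** P) *v u 1 = u 1"
    and v_eig: "\<forall>i\<in>{1..CARD('n)}.
        (transpose (pinv P) ** L ** pinv P) *v v i = lt i *\<^sub>R v i"
    and v_orth: "\<forall>i\<in>{1..CARD('n)}. \<forall>j\<in>{1..CARD('n)}. v i \<bullet> v j = (if i = j then 1 else 0)"
    and lt_sorted: "\<forall>i\<in>{1..CARD('n)}. \<forall>j\<in>{1..CARD('n)}. i \<le> j \<longrightarrow> lt i \<le> lt j"
    and k: "1 \<le> k" "k \<le> CARD('n)"
    and sim: "similar_on P L (span (u ` {1..k})) \<epsilon>"
    and eps: "\<epsilon>\<^sup>2 * lam k < lam 2"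
  shows "lambda_min (matrix_inv (P ** transpose P)) * lam k \<le> lt k \<and>
         lt k \<le> lambda_max (matrix_inv (P ** transpose P))
                  * ((1 + \<epsilon>)\<^sup>2 / (1 - \<epsilon>\<^sup>2 * (lam k / lam 2))) * lam k"
proof -
  define X where "X = pinv P"
  define M where "M = matrix_inv (P ** transpose P)"
  define Lc where "Lc = transpose X ** L ** X"
  define Pi where "Pi = X ** P"
  note pf = pinv_facts[OF P_rank]
  have GM: "P ** transpose P ** M = mat 1" using pf(1) by (simp add: M_def)
  have tM: "transpose M = M" using pf(3) by (simp add: M_def)
  have Xeq: "X = transpose P ** M" using pf(4) by (simp add: X_def M_def)
  have PX: "P ** X = mat 1" using GM by (simp add: Xeq matrix_mul_assoc)
  have XtX: "transpose X ** X = M"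
  proof -
    have "transpose X ** X = M ** (P ** transpose P ** M)"
      using tM by (simp add: Xeq matrix_transpose_mul matrix_mul_assoc)
    thus ?thesis using GM by simp
  qed
  have tPi: "transpose Pi = Pi" using tM by (simp add: Pi_def Xeq matrix_transpose_mul matrix_mul_assoc)
  have PiPi: "Pi ** Pi = Pi" using PX by (metis Pi_def matrix_mul_assoc matrix_mul_lid)
  have qLc: "y \<bullet> (Lc *v y) = (X *v y) \<bullet> (L *v (X *v y))" for y
  proof -
    have "Lc *v y = transpose X *v (L *v (X *v y))" by (simp add: Lc_def matrix_vector_mul_assoc matrix_mul_assoc del: transpose_matrix_vector)
    thus ?thesis by (metis dot_transpose transpose_transpose inner_commute)
  qed
  have nX: "(X *v y) \<bullet> (X *v y) = y \<bullet> (M *v y)" for y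
  proof -
    have "(X *v y) \<bullet> (X *v y) = y \<bullet> (transpose X *v (X *v y))"
      by (metis dot_transpose transpose_transpose inner_commute)
    thus ?thesis using XtX by (simp add: matrix_vector_mul_assoc del: transpose_matrix_vector)
  qed
  have Pivec: "Pi *v x = X *v (P *v x)" for x by (simp add: Pi_def matrix_vector_mul_assoc)
  have nN: "CARD('n) \<le> CARD('N)" using rank_bound[of P] P_rank by simp
  have kN: "k \<le> CARD('N)" using k nN by simp
  have lamk0: "0 \<le> lam k"
  proof -
    have "lam 1 \<le> lam k" using lam_sorted k kN by auto
    thus ?thesis using lam1 by simp
  qed
  have lam2pos: "0 < lam 2" using lam1 lam12 by simp
  have symM: "transpose M = M" by (rule tM)
  have Ufull: "span (u ` {1..CARD('N)}) = UNIV"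
  proof -
    have "UNIV \<subseteq> span (u ` {1..CARD('N)})"
    proof (rule card_ge_dim_independent)
      show "independent (u ` {1..CARD('N)})" using on_indep(1)[OF u_orth] .
      have "card (u ` {1..CARD('N)}) = CARD('N)" using on_indep(2)[OF u_orth] by (simp add: card_image)
      thus "dim (UNIV :: (real^'N) set) \<le> card (u ` {1..CARD('N)})" using dim_subset_UNIV_cart by metis
    qed auto
    thus ?thesis by auto
  qed
  have u_orth_sub: "\<forall>i\<in>I. \<forall>j\<in>I. u i \<bullet> u j = (if i = j then 1 else 0)" if "I \<subseteq> {1..CARD('N)}" for I
    using u_orth that by blast
  have u_eig_sub: "\<forall>i\<in>I. L *v u i = lam i *\<^sub>R u i" if "I \<subseteq> {1..CARD('N)}" for I
    using u_eig that by blast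
  have v_orth_sub: "\<forall>i\<in>I. \<forall>j\<in>I. v i \<bullet> v j = (if i = j then 1 else 0)" if "I \<subseteq> {1..CARD('n)}" for I
    using v_orth that by blast
  have v_eig_sub: "\<forall>i\<in>I. Lc *v v i = lt i *\<^sub>R v i" if "I \<subseteq> {1..CARD('n)}" for I
    using v_eig that unfolding Lc_def X_def by blast
  have lower: "lambda_min M * lam k \<le> lt k"
  proof -
    define Vk where "Vk = span (v ` {1..k})"
    define Tu where "Tu = span (u ` {k..CARD('N)})"
    have injX: "inj ((*v) X)"
      by (rule injI) (metis PX matrix_vector_mul_assoc matrix_vector_mul_lid)
    have dVk: "dim Vk = k" unfolding Vk_def using on_dim[OF v_orth_sub[of "{1..k}"]] k by simp
    have dS: "dim ((*v) X ` Vk) = k"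
      using eucl.dim_image_eq[OF matrix_vector_mul_linear, of X Vk] injX dVk
      by (metis inj_on_subset subset_UNIV)
    have dT: "dim Tu = CARD('N) + 1 - k" unfolding Tu_def using on_dim[OF u_orth_sub[of "{k..CARD('N)}"]] k by simp
    obtain x where x: "x \<in> (*v) X ` Vk" "x \<in> Tu" "x \<noteq> 0"
    proof -
      have s1: "subspace ((*v) X ` Vk)" unfolding Vk_def
        by (intro linear_subspace_image matrix_vector_mul_linear subspace_span)
      have s2: "subspace Tu" unfolding Tu_def by simp
      have "dim ((*v) X ` Vk) + dim Tu > CARD('N)" using dS dT kN k by simp
      thus ?thesis using int_nonzero[OF s1 s2] that by blast
    qed
    then obtain y where y: "y \<in> Vk" "x = X *v y" by auto
    have y0: "y \<noteq> 0" using x(3) y(2) by auto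
    have h1: "lam k * (x \<bullet> x) \<le> x \<bullet> (L *v x)"
      using on_bounds(2)[OF _ u_orth_sub[of "{k..CARD('N)}"] u_eig_sub[of "{k..CARD('N)}"], of x "lam k"]
        x(2) lam_sorted k kN unfolding Tu_def by auto
    have h2: "y \<bullet> (Lc *v y) \<le> lt k * (y \<bullet> y)"
      using on_bounds(1)[OF _ v_orth_sub[of "{1..k}"] v_eig_sub[of "{1..k}"], of y "lt k"]
        y(1) lt_sorted k unfolding Vk_def by auto
    have h3: "lambda_min M * (y \<bullet> y) \<le> x \<bullet> x"
      using lmin_le[OF symM, of y] nX[of y] y(2) by simp
    have "lam k * (lambda_min M * (y \<bullet> y)) \<le> lam k * (x \<bullet> x)"
      using h3 lamk0 by (rule mult_left_mono)
    also have "\<dots> \<le> lt k * (y \<bullet> y)" using h1 h2 qLc[of y] y(2) by simp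
    finally have "(lambda_min M * lam k) * (y \<bullet> y) \<le> lt k * (y \<bullet> y)" by (simp add: mult_ac)
    thus ?thesis using y0 by (simp add: mult_le_cancel_right)
  qed
  define D where "D = 1 - \<epsilon>\<^sup>2 * (lam k / lam 2)"
  have eps0: "0 \<le> \<epsilon>" using sim by (simp add: similar_on_def)
  have Dpos: "D > 0" using eps lam2pos by (simp add: D_def field_simps)
  define Uk where "Uk = span (u ` {1..k})"
  have key: "D * (x \<bullet> x) \<le> (Pi *v x) \<bullet> (Pi *v x) \<and>
             (Pi *v x) \<bullet> (L *v (Pi *v x)) \<le> (1 + \<epsilon>)\<^sup>2 * lam k * (x \<bullet> x)" if xU: "x \<in> Uk" for x
  proof -
    define a where "a = x \<bullet> (L *v x)"
    define e where "e = x - Pi *v x"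
    define c where "c = e \<bullet> (L *v e)"
    define b where "b = e \<bullet> (L *v x)"
    have a_le: "a \<le> lam k * (x \<bullet> x)"
      using on_bounds(1)[OF _ u_orth_sub[of "{1..k}"] u_eig_sub[of "{1..k}"], of x "lam k"]
        xU lam_sorted k kN unfolding Uk_def a_def by auto
    have a0: "0 \<le> a" using L_psd a_def by simp
    have c0: "0 \<le> c" using L_psd c_def by simp
    have "mnorm L e \<le> \<epsilon> * mnorm L x" using sim xU unfolding similar_on_def Uk_def e_def Pi_def X_def by blast
    hence "sqrt c \<le> sqrt (\<epsilon>\<^sup>2 * a)" unfolding mnorm_def c_def a_def using eps0
      by (simp add: real_sqrt_mult)
    hence c_le: "c \<le> \<epsilon>\<^sup>2 * a" by simp
    have ue: "u 1 \<bullet> e = 0"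
    proof -
      have "u 1 \<bullet> (Pi *v x) = (transpose Pi *v u 1) \<bullet> x" by (metis dot_transpose transpose_transpose)
      also have "\<dots> = u 1 \<bullet> x" using tPi Pi_u1 by (simp add: Pi_def X_def del: transpose_matrix_vector)
      finally show ?thesis by (simp add: e_def inner_diff_right)
    qed
    have ee: "lam 2 * (e \<bullet> e) \<le> c"
    proof -
      have eU: "e \<in> span (u ` {1..CARD('N)})" using Ufull by simp
      note ex = on_expand[OF _ u_orth u_eig eU]
      have "lam 2 * (e \<bullet> e) = (\<Sum>i\<in>{1..CARD('N)}. lam 2 * (e \<bullet> u i)^2)"
        using ex(2) by (simp add: sum_distrib_left)
      also have "\<dots> \<le> (\<Sum>i\<in>{1..CARD('N)}. lam i * (e \<bullet> u i)^2)"
      proof (rule sum_mono)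
        fix i assume i: "i \<in> {1..CARD('N)}"
        show "lam 2 * (e \<bullet> u i)^2 \<le> lam i * (e \<bullet> u i)^2"
        proof (cases "i = 1")
          case True thus ?thesis using ue by (simp add: inner_commute)
        next
          case False
          hence "lam 2 \<le> lam i" using lam_sorted i N2 by auto
          thus ?thesis by (simp add: mult_right_mono)
        qed
      qed
      also have "\<dots> = c" using ex(1) by (simp add: c_def)
      finally show ?thesis .
    qed
    have Pie: "(Pi *v x) \<bullet> e = 0"
    proof -
      have "(Pi *v x) \<bullet> (Pi *v x) = x \<bullet> (transpose Pi *v (Pi *v x))"
        by (metis dot_transpose transpose_transpose inner_commute)
      also have "\<dots> = x \<bullet> (Pi *v x)" using tPi PiPi by (simp add: matrix_vector_mul_assoc del: transpose_matrix_vector)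
      finally show ?thesis by (simp add: e_def inner_diff_right inner_commute)
    qed
    have xx: "x \<bullet> x = (Pi *v x) \<bullet> (Pi *v x) + e \<bullet> e"
    proof -
      have "x = Pi *v x + e" by (simp add: e_def)
      hence "x \<bullet> x = (Pi *v x + e) \<bullet> (Pi *v x + e)" by simp
      also have "\<dots> = (Pi *v x) \<bullet> (Pi *v x) + 2 * ((Pi *v x) \<bullet> e) + e \<bullet> e"
        by (simp add: inner_add_left inner_add_right inner_commute)
      finally show ?thesis using Pie by simp
    qed
    have part1: "D * (x \<bullet> x) \<le> (Pi *v x) \<bullet> (Pi *v x)"
    proof -
      have "e \<bullet> e \<le> \<epsilon>\<^sup>2 * a / lam 2" using ee c_le lam2pos by (simp add: field_simps)
      also have "\<dots> \<le> \<epsilon>\<^sup>2 * (lam k * (x \<bullet> x)) / lam 2"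
        using a_le lam2pos by (intro divide_right_mono mult_left_mono) auto
      finally have "e \<bullet> e \<le> \<epsilon>\<^sup>2 * (lam k / lam 2) * (x \<bullet> x)" by simp
      thus ?thesis using xx by (simp add: D_def algebra_simps)
    qed
    have bsq: "b^2 \<le> a * c"
    proof (rule disc)
      show "\<forall>t. 0 \<le> a + 2*t*b + t^2*c"
      proof
        fix t :: real
        have "0 \<le> (x + t *\<^sub>R e) \<bullet> (L *v (x + t *\<^sub>R e))" using L_psd by blast
        thus "0 \<le> a + 2*t*b + t^2*c" by (simp only: quad_expand[OF L_sym] a_def b_def c_def)
      qed
    qed (use a0 c0 in auto)
    have "a * c \<le> a * (\<epsilon>\<^sup>2 * a)" by (rule mult_left_mono[OF c_le a0])
    also have "\<dots> = (\<epsilon> * a)^2" by (simp add: power2_eq_square)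
    finally have "b^2 \<le> (\<epsilon> * a)^2" using bsq by linarith
    hence "\<bar>b\<bar>^2 \<le> (\<epsilon> * a)^2" by (simp only: power2_abs)
    hence babs: "\<bar>b\<bar> \<le> \<epsilon> * a" using eps0 a0 by (rule_tac power2_le_imp_le) auto
    have "(Pi *v x) \<bullet> (L *v (Pi *v x)) = a - 2 * b + c"
    proof -
      have "Pi *v x = x + (-1) *\<^sub>R e" by (simp add: e_def)
      hence "(Pi *v x) \<bullet> (L *v (Pi *v x)) = (x + (-1) *\<^sub>R e) \<bullet> (L *v (x + (-1) *\<^sub>R e))" by simp
      also have "\<dots> = a - 2*b + c" unfolding quad_expand[OF L_sym] a_def b_def c_def by simp
      finally show ?thesis .
    qed
    also have "\<dots> \<le> a + 2 * (\<epsilon> * a) + \<epsilon>\<^sup>2 * a" using babs c_le by linarith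
    also have "\<dots> = (1 + \<epsilon>)\<^sup>2 * a" by (simp add: power2_eq_square algebra_simps)
    also have "\<dots> \<le> (1 + \<epsilon>)\<^sup>2 * (lam k * (x \<bullet> x))" using a_le by (intro mult_left_mono) auto
    finally show ?thesis using part1 by (simp add: mult_ac)
  qed
  have upper: "lt k \<le> lambda_max M * ((1 + \<epsilon>)\<^sup>2 / D) * lam k"
  proof -
    define Tv where "Tv = span (v ` {k..CARD('n)})"
    have subU: "subspace Uk" by (simp add: Uk_def)
    have injP: "inj_on ((*v) P) (span Uk)"
    proof (rule inj_onI)
      fix x x' assume xs: "x \<in> span Uk" "x' \<in> span Uk" "P *v x = P *v x'"
      have "x \<in> Uk" "x' \<in> Uk" using xs(1,2) by (simp_all add: Uk_def span_span)
      hence d: "x - x' \<in> Uk" by (simp add: Uk_def span_diff)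
      have "P *v (x - x') = 0" using xs(3) by (simp add: matrix_vector_mult_diff_distrib)
      hence "Pi *v (x - x') = 0" by (simp add: Pivec)
      hence "D * ((x - x') \<bullet> (x - x')) \<le> 0" using key[OF d] by simp
      hence "(x - x') \<bullet> (x - x') \<le> 0" using Dpos by (simp add: mult_le_0_iff)
      hence "x - x' = 0" by (metis inner_eq_zero_iff inner_ge_zero order_antisym)
      thus "x = x'" by simp
    qed
    have dUk: "dim Uk = k" unfolding Uk_def using on_dim[OF u_orth_sub[of "{1..k}"]] k kN by simp
    have dS: "dim ((*v) P ` Uk) = k"
      using eucl.dim_image_eq[OF matrix_vector_mul_linear injP] dUk by simp
    have dT: "dim Tv = CARD('n) + 1 - k" unfolding Tv_def using on_dim[OF v_orth_sub[of "{k..CARD('n)}"]] k by simp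
    obtain y where y: "y \<in> (*v) P ` Uk" "y \<in> Tv" "y \<noteq> 0"
    proof -
      have s1: "subspace ((*v) P ` Uk)" unfolding Uk_def
        by (intro linear_subspace_image matrix_vector_mul_linear subspace_span)
      have s2: "subspace Tv" unfolding Tv_def by simp
      have "dim ((*v) P ` Uk) + dim Tv > CARD('n)" using dS dT k by simp
      thus ?thesis using int_nonzero[OF s1 s2] that by blast
    qed
    then obtain x where x: "x \<in> Uk" "y = P *v x" by auto
    have x0: "x \<noteq> 0" using y(3) x(2) by auto
    have h1: "lt k * (y \<bullet> y) \<le> y \<bullet> (Lc *v y)"
      using on_bounds(2)[OF _ v_orth_sub[of "{k..CARD('n)}"] v_eig_sub[of "{k..CARD('n)}"], of y "lt k"]
        y(2) lt_sorted k unfolding Tv_def by auto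
    have h2: "y \<bullet> (Lc *v y) = (Pi *v x) \<bullet> (L *v (Pi *v x))" using qLc[of y] x(2) Pivec by simp
    have h3: "(Pi *v x) \<bullet> (Pi *v x) \<le> lambda_max M * (y \<bullet> y)"
      using lmax_ge[OF symM, of y] nX[of y] x(2) Pivec by simp
    show ?thesis
      using final[OF Dpos _ _ lamk0, of "x \<bullet> x" "y \<bullet> y" "lt k" \<epsilon> "lambda_max M"]
        key[OF x(1)] h1 h2 h3 x0 y(3) by force
  qed
  show ?thesis using lower upper by (simp add: M_def D_def)
qed

end
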